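(* Let $\mathbf{s}_1,\dots,\mathbf{s}_l\in\mathbb{Q}^n$, let $\mathcal P\subseteq\mathbb{R}^n$ be the convex hull of $\bigcup_{i=1}^l(\mathbf{s}_i+\mathbb{R}_{\le0}^n)$ and $P=\mathcal P\cap\mathbb{Q}^n$. Then $$K\{\mathbf{X};P\}=\bigcap_{i=1}^l K\{\mathbf{X};\mathbf{s}_i\}.$$
   Context: $K$ is a field complete for a discrete valuation $\mathrm{val}$. For $\mathbf{r}\in\mathbb{Q}^n$, $\mathrm{val}_{\mathbf{r}}(a\mathbf{X}^\alpha)=\mathrm{val}(a)-\mathbf{r}\cdot\alpha$, and $K\{\mathbf{X};\mathbf{r}\}$ is the set of power series $\sum_{\alpha\in\mathbb{N}^n}a_\alpha\mathbf{X}^\alpha$ ($a_\alpha\in K$) with $\mathrm{val}_{\mathbf{r}}(a_\alpha\mathbf{X}^\alpha)\to+\infty$ as $|\alpha|\to\infty$. For $P\subseteq\mathbb{Q}^n$, $K\{\mathbf{X};P\}$ is the set of power series $\sum a_\alpha\mathbf{X}^\alpha$ such that for every $\mathbf{r}\in P$, $\mathrm{val}_{\mathbf{r}}(a_\alpha\mathbf{X}^\alpha)\to+\infty$ as $|\alpha|\to\infty$. *)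

theory Defs
  imports "HOL-Analysis.Analysis"
begin

text \<open>A discrete (normalised) valuation on a field, given on nonzero elements
  (the value of 0 is +infinity by convention and is never consulted).\<close>
definition discrete_valuation :: "('a::field \<Rightarrow> int) \<Rightarrow> bool" where
  "discrete_valuation v \<longleftrightarrow>
     (\<forall>x y. x \<noteq> 0 \<longrightarrow> y \<noteq> 0 \<longrightarrow> v (x * y) = v x + v y) \<and>
     (\<forall>x y. x \<noteq> 0 \<longrightarrow> y \<noteq> 0 \<longrightarrow> x + y \<noteq> 0 \<longrightarrow> v (x + y) \<ge> min (v x) (v y)) \<and>
     (\<forall>k. \<exists>x. x \<noteq> 0 \<and> v x = k)"

definition val_complete :: "('a::field \<Rightarrow> int) \<Rightarrow> bool" where
  "val_complete v \<longleftrightarrow>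
     (\<forall>x :: nat \<Rightarrow> 'a.
        (\<forall>M. \<exists>N. \<forall>m\<ge>N. \<forall>n\<ge>N. x m = x n \<or> v (x m - x n) \<ge> M) \<longrightarrow>
        (\<exists>L. \<forall>M. \<exists>N. \<forall>n\<ge>N. x n = L \<or> v (x n - L) \<ge> M))"

text \<open>The r-valuation of a X^alpha is val a - r . alpha (+infinity if a = 0).
  K{X;r}: val_r(a_alpha X^alpha) tends to +infinity as |alpha| tends to infinity.\<close>
definition restricted_ps :: "('a::field \<Rightarrow> int) \<Rightarrow> real^'n \<Rightarrow> (nat^'n \<Rightarrow> 'a) set" where
  "restricted_ps v r = {a. \<forall>M::real. \<exists>d::nat. \<forall>\<alpha>::nat^'n. (\<Sum>i\<in>UNIV. \<alpha>$i) > d \<longrightarrow>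
      a \<alpha> = 0 \<or> M \<le> real_of_int (v (a \<alpha>)) - (\<Sum>i\<in>UNIV. r$i * real (\<alpha>$i))}"

definition restricted_ps_set :: "('a::field \<Rightarrow> int) \<Rightarrow> (real^'n) set \<Rightarrow> (nat^'n \<Rightarrow> 'a) set" where
  "restricted_ps_set v P = {a. \<forall>r\<in>P. a \<in> restricted_ps v r}"

definition rat_vecs :: "(real^'n) set" where
  "rat_vecs = {x. \<forall>i. x$i \<in> \<rat>}"

definition nonpos_orthant :: "(real^'n) set" where
  "nonpos_orthant = {y. \<forall>i. y$i \<le> 0}"

end

theory Submission
  imports Defs
begin

lemma inner_w: "(\<chi> j. real (\<alpha>$j)) \<bullet> (x::real^'n) = (\<Sum>j\<in>UNIV. x$j * real (\<alpha>$j))"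
  by (simp add: inner_vec_def mult.commute)

lemma inner_w_nonpos: "y \<in> nonpos_orthant \<Longrightarrow> (\<chi> j. real ((\<alpha>::nat^'n)$j)) \<bullet> (y::real^'n) \<le> 0"
  unfolding inner_w nonpos_orthant_def
  by (auto intro!: sum_nonpos simp: mult_nonpos_nonneg)

theorem mainTheorem12:
  fixes v :: "'a::field \<Rightarrow> int" and l :: nat and s :: "nat \<Rightarrow> real^'n"
  assumes "discrete_valuation v" and "val_complete v"
    and "\<forall>i\<in>{1..l}. s i \<in> rat_vecs"
  shows "restricted_ps_set v
           ((convex hull (\<Union>i\<in>{1..l}. (\<lambda>y. s i + y) ` nonpos_orthant)) \<inter> rat_vecs)
         = (\<Inter>i\<in>{1..l}. restricted_ps v (s i))"
proof
  show "restricted_ps_set v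
           ((convex hull (\<Union>i\<in>{1..l}. (\<lambda>y. s i + y) ` nonpos_orthant)) \<inter> rat_vecs)
         \<subseteq> (\<Inter>i\<in>{1..l}. restricted_ps v (s i))"
  proof
    fix a assume a: "a \<in> restricted_ps_set v
           ((convex hull (\<Union>i\<in>{1..l}. (\<lambda>y. s i + y) ` nonpos_orthant)) \<inter> rat_vecs)"
    show "a \<in> (\<Inter>i\<in>{1..l}. restricted_ps v (s i))"
    proof
      fix i assume i: "i \<in> {1..l}"
      have "0 \<in> nonpos_orthant" by (simp add: nonpos_orthant_def)
      hence "s i \<in> (\<lambda>y. s i + y) ` nonpos_orthant" by force
      hence "s i \<in> convex hull (\<Union>i\<in>{1..l}. (\<lambda>y. s i + y) ` nonpos_orthant)"
        using i by (meson UN_I hull_subset subsetD)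
      with assms(3) i have "s i \<in> (convex hull (\<Union>i\<in>{1..l}. (\<lambda>y. s i + y) ` nonpos_orthant)) \<inter> rat_vecs"
        by blast
      with a show "a \<in> restricted_ps v (s i)" unfolding restricted_ps_set_def by blast
    qed
  qed
next
  show "(\<Inter>i\<in>{1..l}. restricted_ps v (s i)) \<subseteq> restricted_ps_set v
           ((convex hull (\<Union>i\<in>{1..l}. (\<lambda>y. s i + y) ` nonpos_orthant)) \<inter> rat_vecs)"
  proof
    fix a assume a: "a \<in> (\<Inter>i\<in>{1..l}. restricted_ps v (s i))"
    show "a \<in> restricted_ps_set v
           ((convex hull (\<Union>i\<in>{1..l}. (\<lambda>y. s i + y) ` nonpos_orthant)) \<inter> rat_vecs)"
      unfolding restricted_ps_set_def restricted_ps_def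
    proof (intro CollectI ballI allI)
      fix r M assume r: "r \<in> (convex hull (\<Union>i\<in>{1..l}. (\<lambda>y. s i + y) ` nonpos_orthant)) \<inter> rat_vecs"
      have "\<forall>i\<in>{1..l}. \<exists>d::nat. \<forall>\<alpha>::nat^'n. (\<Sum>j\<in>UNIV. \<alpha>$j) > d \<longrightarrow>
         a \<alpha> = 0 \<or> M \<le> real_of_int (v (a \<alpha>)) - (\<Sum>j\<in>UNIV. s i$j * real (\<alpha>$j))"
        using a unfolding restricted_ps_def by blast
      then obtain D where D: "\<And>i \<alpha>. i\<in>{1..l} \<Longrightarrow> (\<Sum>j\<in>UNIV. (\<alpha>::nat^'n)$j) > D i \<Longrightarrow>
         a \<alpha> = 0 \<or> M \<le> real_of_int (v (a \<alpha>)) - (\<Sum>j\<in>UNIV. s i$j * real (\<alpha>$j))"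
        by metis
      define d where "d = (\<Sum>i\<in>{1..l}. D i)"
      have Dd: "i \<in> {1..l} \<Longrightarrow> D i \<le> d" for i
        unfolding d_def by (rule member_le_sum) auto
      show "\<exists>d::nat. \<forall>\<alpha>::nat^'n. (\<Sum>i\<in>UNIV. \<alpha>$i) > d \<longrightarrow>
          a \<alpha> = 0 \<or> M \<le> real_of_int (v (a \<alpha>)) - (\<Sum>i\<in>UNIV. r$i * real (\<alpha>$i))"
      proof (intro exI allI impI)
        fix \<alpha> :: "nat^'n" assume al: "(\<Sum>i\<in>UNIV. \<alpha>$i) > d"
        show "a \<alpha> = 0 \<or> M \<le> real_of_int (v (a \<alpha>)) - (\<Sum>i\<in>UNIV. r$i * real (\<alpha>$i))"
        proof (cases "a \<alpha> = 0")
          case False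
          define w where "w = (\<chi> j. real (\<alpha>$j))"
          define H where "H = {x::real^'n. w \<bullet> x \<le> real_of_int (v (a \<alpha>)) - M}"
          have cH: "convex H" unfolding H_def by (rule convex_halfspace_le)
          have sub: "(\<Union>i\<in>{1..l}. (\<lambda>y. s i + y) ` nonpos_orthant) \<subseteq> H"
          proof clarify
            fix i and y :: "real^'n" assume i: "i \<in> {1..l}" and y: "y \<in> nonpos_orthant"
            have "D i < (\<Sum>j\<in>UNIV. \<alpha>$j)" using Dd[OF i] al by linarith
            with D[OF i] False have "M \<le> real_of_int (v (a \<alpha>)) - w \<bullet> s i"
              unfolding w_def inner_w by blast
            moreover have "w \<bullet> y \<le> 0" unfolding w_def by (rule inner_w_nonpos[OF y])
            ultimately show "s i + y \<in> H" unfolding H_def by (simp add: inner_add_right)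
          qed
          have "convex hull (\<Union>i\<in>{1..l}. (\<lambda>y. s i + y) ` nonpos_orthant) \<subseteq> H" by (rule hull_minimal[of _ _ convex, OF sub cH])
          hence "r \<in> H" using r by blast
          thus ?thesis unfolding H_def w_def inner_w by simp
        qed simp
      qed
    qed
  qed
qed

end
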